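(* Let $\mathbf{y}\in\mathbb{R}_\infty$. Then: (i) the Moore–Penrose pseudoinverse $\mathbf{y}^+$ of $\mathbf{y}$ (as a bounded operator on $\ell_{2+}$) belongs to $\mathbb{R}_\infty$; (ii) $\mathbf{y}$ has a unique positive semi-definite square root $\sqrt{\mathbf{y}}$ if and only if $\mathbf{y}\succeq\mathbf{0}$, and furthermore $\sqrt{\mathbf{y}}\in\mathbb{R}_\infty$.
   Context: $\ell_{2+}$ is the Hilbert space of square-summable real sequences $(y[0],y[1],\ldots)$ with inner product $\langle x,y\rangle=\sum_k x[k]y[k]$. The forward shift is $\mathfrak{q}:(y[0],y[1],\ldots)\mapsto(y[1],y[2],\ldots)$, with adjoint $\mathfrak{q}^*:(y[0],y[1],\ldots)\mapsto(0,y[0],y[1],\ldots)$. $\mathbb{R}_\infty=\{\sum_{k=0}^N\alpha_k(\mathfrak{q}^* )^k\mathfrak{q}^k : N\in\mathbb{N},\ \alpha_k\in\mathbb{R}\}$. An operator $\mathbf{M}$ is positive semi-definite, $\mathbf{M}\succeq\mathbf{0}$, if $\mathbf{M}=\mathbf{M}^*$ and $\langle x,\mathbf{M}x\rangle\ge0$ for all $x\in\ell_{2+}$. *)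

theory Defs
  imports "HOL-Analysis.Analysis"
begin

typedef l2 = "{x :: nat \<Rightarrow> real. summable (\<lambda>k. (x k)\<^sup>2)}"
  by (rule exI[of _ "\<lambda>_. 0"]) simp

definition l2_inner :: "l2 \<Rightarrow> l2 \<Rightarrow> real" where
  "l2_inner x y = (\<Sum>k. Rep_l2 x k * Rep_l2 y k)"

definition l2_norm :: "l2 \<Rightarrow> real" where
  "l2_norm x = sqrt (l2_inner x x)"

definition l2_lin :: "real \<Rightarrow> l2 \<Rightarrow> real \<Rightarrow> l2 \<Rightarrow> l2" where
  "l2_lin a x b y = Abs_l2 (\<lambda>k. a * Rep_l2 x k + b * Rep_l2 y k)"

definition fwd_shift :: "l2 \<Rightarrow> l2" where
  "fwd_shift y = Abs_l2 (\<lambda>k. Rep_l2 y (Suc k))"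

definition bwd_shift :: "l2 \<Rightarrow> l2" where
  "bwd_shift y = Abs_l2 (\<lambda>k. if k = 0 then 0 else Rep_l2 y (k - 1))"

definition bounded_op :: "(l2 \<Rightarrow> l2) \<Rightarrow> bool" where
  "bounded_op T \<longleftrightarrow>
     (\<forall>a x b y. T (l2_lin a x b y) = l2_lin a (T x) b (T y)) \<and>
     (\<exists>C. \<forall>x. l2_norm (T x) \<le> C * l2_norm x)"

definition is_adjoint :: "(l2 \<Rightarrow> l2) \<Rightarrow> (l2 \<Rightarrow> l2) \<Rightarrow> bool" where
  "is_adjoint T S \<longleftrightarrow> (\<forall>x y. l2_inner x (T y) = l2_inner (S x) y)"

definition psd :: "(l2 \<Rightarrow> l2) \<Rightarrow> bool" where
  "psd M \<longleftrightarrow> bounded_op M \<and> is_adjoint M M \<and> (\<forall>x. 0 \<le> l2_inner x (M x))"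

definition R_inf :: "(l2 \<Rightarrow> l2) set" where
  "R_inf = {T. \<exists>(N::nat) (\<alpha>::nat \<Rightarrow> real).
      T = (\<lambda>y. Abs_l2 (\<lambda>n. \<Sum>k\<le>N. \<alpha> k * Rep_l2 ((bwd_shift ^^ k) ((fwd_shift ^^ k) y)) n))}"

definition is_mp_pinv :: "(l2 \<Rightarrow> l2) \<Rightarrow> (l2 \<Rightarrow> l2) \<Rightarrow> bool" where
  "is_mp_pinv A P \<longleftrightarrow> bounded_op P \<and>
     A \<circ> P \<circ> A = A \<and> P \<circ> A \<circ> P = P \<and>
     is_adjoint (A \<circ> P) (A \<circ> P) \<and> is_adjoint (P \<circ> A) (P \<circ> A)"

end

theory Submission
  imports Defs
begin

lemma Rep_sq: "summable (\<lambda>k. (Rep_l2 x k)^2)"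
  using Rep_l2 by simp

lemma Abs_inv: "summable (\<lambda>k. (f k)^2) \<Longrightarrow> Rep_l2 (Abs_l2 f) = f"
  by (simp add: Abs_l2_inverse)

lemma l2_eqI: "(\<And>k. Rep_l2 u k = Rep_l2 v k) \<Longrightarrow> u = v"
  by (metis Rep_l2_inject ext)

lemma sq_bound_summable:
  fixes x f :: "nat \<Rightarrow> real" and B :: real
  assumes "summable (\<lambda>k. (x k)^2)" "\<And>k. \<bar>f k\<bar> \<le> B * \<bar>x k\<bar>"
  shows "summable (\<lambda>k. (f k)^2)"
proof (rule summable_comparison_test'[of "\<lambda>k. B^2 * (x k)^2" 0])
  show "summable (\<lambda>k. B^2 * (x k)^2)" using assms(1) by (rule summable_mult)
  fix n
  have "\<bar>f n\<bar>^2 \<le> (B * \<bar>x n\<bar>)^2"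
    by (rule power_mono[OF assms(2)]) simp
  then show "norm ((f n)^2) \<le> B^2 * (x n)^2"
    by (simp add: power_mult_distrib)
qed

lemma lin_summable:
  "summable (\<lambda>k. (a * Rep_l2 x k + b * Rep_l2 y k)^2)"
proof (rule summable_comparison_test'[of "\<lambda>k. 2*a^2 * (Rep_l2 x k)^2 + 2*b^2 * (Rep_l2 y k)^2" 0])
  show "summable (\<lambda>k. 2*a^2 * (Rep_l2 x k)^2 + 2*b^2 * (Rep_l2 y k)^2)"
    by (intro summable_add summable_mult Rep_sq)
  fix n
  have "0 \<le> (a * Rep_l2 x n - b * Rep_l2 y n)^2" by simp
  then have "(a * Rep_l2 x n + b * Rep_l2 y n)^2 \<le> 2*a^2 * (Rep_l2 x n)^2 + 2*b^2 * (Rep_l2 y n)^2"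
    by (simp add: power2_eq_square algebra_simps)
  then show "norm ((a * Rep_l2 x n + b * Rep_l2 y n)^2) \<le> 2*a^2 * (Rep_l2 x n)^2 + 2*b^2 * (Rep_l2 y n)^2"
    by simp
qed

lemma Rep_lin: "Rep_l2 (l2_lin a x b y) k = a * Rep_l2 x k + b * Rep_l2 y k"
  unfolding l2_lin_def using Abs_inv[OF lin_summable] by simp

definition ev_const :: "(nat \<Rightarrow> real) \<Rightarrow> bool" where
  "ev_const c \<longleftrightarrow> (\<exists>N. \<forall>n\<ge>N. c n = c N)"

definition dg :: "(nat \<Rightarrow> real) \<Rightarrow> l2 \<Rightarrow> l2" where
  "dg c x = Abs_l2 (\<lambda>n. c n * Rep_l2 x n)"

lemma ev_const_bounded:
  assumes "ev_const c" shows "\<exists>B. \<forall>n. \<bar>c n\<bar> \<le> B"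
proof -
  obtain N where N: "\<forall>n\<ge>N. c n = c N" using assms unfolding ev_const_def by (elim exE)
  have le: "\<bar>c n\<bar> \<le> (\<Sum>k\<le>N. \<bar>c k\<bar>)" if "n \<le> N" for n
  proof (rule member_le_sum[where f="\<lambda>k. \<bar>c k\<bar>"])
    show "n \<in> {..N}" using that by simp
  qed auto
  show ?thesis
  proof (intro exI allI)
    fix n show "\<bar>c n\<bar> \<le> (\<Sum>k\<le>N. \<bar>c k\<bar>)"
    proof (cases "n \<le> N")
      case True then show ?thesis by (rule le)
    next
      case False
      then have "c n = c N" using N[rule_format, of n] by linarith
      then show ?thesis using le[of N] by simp
    qed
  qed
qed

lemma ev_const_comp: "ev_const c \<Longrightarrow> ev_const (\<lambda>n. f (c n))"
proof -
  assume "ev_const c"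
  then obtain N where h: "\<forall>n\<ge>N. c n = c N" unfolding ev_const_def by (elim exE)
  show ?thesis unfolding ev_const_def
  proof (intro exI[of _ N] allI impI)
    fix n assume n: "N \<le> n"
    have "c n = c N" using h[rule_format, of n] n by linarith
    then show "f (c n) = f (c N)" by simp
  qed
qed

lemma ev_const_mult: "ev_const c \<Longrightarrow> ev_const d \<Longrightarrow> ev_const (\<lambda>n. c n * d n)"
  unfolding ev_const_def
proof -
  assume "\<exists>N. \<forall>n\<ge>N. c n = c N" "\<exists>N. \<forall>n\<ge>N. d n = d N"
  then obtain N M where "\<forall>n\<ge>N. c n = c N" "\<forall>n\<ge>M. d n = d M" by (elim exE)
  note h = this
  show "\<exists>N. \<forall>n\<ge>N. c n * d n = c N * d N"
  proof (intro exI[of _ "max N M"] allI impI)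
    fix n assume n: "max N M \<le> n"
    have "c n = c N" "c (max N M) = c N" "d n = d M" "d (max N M) = d M"
      using h(1)[rule_format, of n] h(1)[rule_format, of "max N M"]
        h(2)[rule_format, of n] h(2)[rule_format, of "max N M"] n by linarith+
    then show "c n * d n = c (max N M) * d (max N M)" by simp
  qed
qed

lemma Rep_dg:
  assumes "ev_const c" shows "Rep_l2 (dg c x) n = c n * Rep_l2 x n"
proof -
  obtain B where B: "\<forall>n. \<bar>c n\<bar> \<le> B" using ev_const_bounded[OF assms] by (elim exE)
  have "summable (\<lambda>n. (c n * Rep_l2 x n)^2)"
    by (rule sq_bound_summable[OF Rep_sq[of x], where B=B]) (simp add: abs_mult B mult_right_mono)
  then show ?thesis unfolding dg_def by (simp add: Abs_inv)
qed

lemma inner_self: "l2_inner x x = (\<Sum>k. (Rep_l2 x k)^2)"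
  unfolding l2_inner_def by (simp add: power2_eq_square)

lemma inner_self_nonneg: "0 \<le> l2_inner x x"
  unfolding inner_self by (rule suminf_nonneg[OF Rep_sq]) simp

lemma inner_self_zero: assumes "l2_inner x x = 0" shows "Rep_l2 x k = 0"
proof -
  have "(\<Sum>k. (Rep_l2 x k)^2) = 0" using assms by (simp only: inner_self)
  then have "\<forall>n. (Rep_l2 x n)^2 = 0" by (rule iffD1[OF suminf_eq_zero_iff[OF Rep_sq[of x] zero_le_power2]])
  then show ?thesis by simp
qed

lemma dg_comp:
  assumes "ev_const c" "ev_const d"
  shows "dg c \<circ> dg d = dg (\<lambda>n. c n * d n)"
  by (rule ext, rule l2_eqI) (simp add: Rep_dg assms ev_const_mult)

lemma dg_adj: "ev_const c \<Longrightarrow> is_adjoint (dg c) (dg c)"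
  unfolding is_adjoint_def l2_inner_def by (simp add: Rep_dg mult_ac)

lemma dg_bounded:
  assumes c: "ev_const c" shows "bounded_op (dg c)"
  unfolding bounded_op_def
proof (intro conjI allI)
  fix a x b y
  show "dg c (l2_lin a x b y) = l2_lin a (dg c x) b (dg c y)"
    by (rule l2_eqI) (simp add: Rep_dg c Rep_lin algebra_simps)
next
  obtain B where B: "\<forall>n. \<bar>c n\<bar> \<le> B" using ev_const_bounded[OF c] by (elim exE)
  have B0: "0 \<le> B" using B[rule_format, of 0] by linarith
  show "\<exists>C. \<forall>x. l2_norm (dg c x) \<le> C * l2_norm x"
  proof (intro exI allI)
    fix x
    have pt: "(c k * Rep_l2 x k)^2 \<le> B^2 * (Rep_l2 x k)^2" for k
    proof -
      have "\<bar>c k * Rep_l2 x k\<bar>^2 \<le> (B * \<bar>Rep_l2 x k\<bar>)^2"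
        by (rule power_mono) (simp_all add: abs_mult B mult_right_mono)
      then show ?thesis by (simp add: power_mult_distrib)
    qed
    have sm: "summable (\<lambda>k. (c k * Rep_l2 x k)^2)"
      by (rule sq_bound_summable[OF Rep_sq[of x], where B=B]) (simp add: abs_mult B mult_right_mono)
    have "l2_inner (dg c x) (dg c x) = (\<Sum>k. (c k * Rep_l2 x k)^2)"
      unfolding inner_self by (simp add: Rep_dg c)
    also have "\<dots> \<le> (\<Sum>k. B^2 * (Rep_l2 x k)^2)"
      by (rule suminf_le[OF pt sm]) (intro summable_mult Rep_sq)
    also have "\<dots> = B^2 * l2_inner x x"
      unfolding inner_self by (rule suminf_mult[OF Rep_sq])
    finally have "l2_inner (dg c x) (dg c x) \<le> B^2 * l2_inner x x" .
    then have "sqrt (l2_inner (dg c x) (dg c x)) \<le> sqrt (B^2 * l2_inner x x)"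
      by (rule real_sqrt_le_mono)
    also have "\<dots> = B * sqrt (l2_inner x x)"
      using B0 by (simp add: real_sqrt_mult)
    finally show "l2_norm (dg c x) \<le> B * l2_norm x" unfolding l2_norm_def .
  qed
qed

definition e :: "nat \<Rightarrow> l2" where
  "e m = Abs_l2 (\<lambda>k. if k = m then 1 else 0)"

lemma Rep_e: "Rep_l2 (e m) k = (if k = m then 1 else 0)"
proof -
  have "summable (\<lambda>k. (if k = m then 1 else 0 :: real)^2)"
  proof -
    have "(\<lambda>k. (if k = m then 1 else 0 :: real)^2) = (\<lambda>k. if k = m then 1 else 0)"
      by auto
    moreover have "summable (\<lambda>k. if k = m then 1 else 0 :: real)"
      using sums_summable[OF sums_single[of m "\<lambda>_. 1::real"]] by simp
    ultimately show ?thesis by simp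
  qed
  then show ?thesis unfolding e_def by (simp add: Abs_inv)
qed

lemma inner_e_left: "l2_inner (e m) x = Rep_l2 x m"
proof -
  have "(\<lambda>k. Rep_l2 (e m) k * Rep_l2 x k) = (\<lambda>k. if k = m then Rep_l2 x k else 0)"
    by (auto simp: Rep_e)
  moreover have "(\<Sum>k. if k = m then Rep_l2 x k else 0) = Rep_l2 x m"
    by (rule sums_unique[symmetric, OF sums_single])
  ultimately show ?thesis unfolding l2_inner_def by simp
qed

lemma inner_e_right: "l2_inner x (e m) = Rep_l2 x m"
  using inner_e_left[of m x] unfolding l2_inner_def by (simp add: mult.commute)


lemma Rep_fwd: "Rep_l2 (fwd_shift y) k = Rep_l2 y (Suc k)"
proof -
  have "summable (\<lambda>k. (Rep_l2 y (Suc k))^2)"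
    using summable_Suc_iff[of "\<lambda>k. (Rep_l2 y k)^2"] Rep_sq[of y] by simp
  then show ?thesis unfolding fwd_shift_def by (simp add: Abs_inv)
qed

lemma Rep_bwd: "Rep_l2 (bwd_shift y) k = (if k = 0 then 0 else Rep_l2 y (k - 1))"
proof -
  let ?g = "\<lambda>k. (if k = 0 then 0 else Rep_l2 y (k - 1))^2"
  have "summable (\<lambda>k. ?g (Suc k))" using Rep_sq[of y] by simp
  then have "summable ?g" by (rule summable_Suc_iff[THEN iffD1])
  then show ?thesis unfolding bwd_shift_def by (simp add: Abs_inv)
qed

lemma Rep_fwd_pow: "Rep_l2 ((fwd_shift ^^ j) y) n = Rep_l2 y (n + j)"
  by (induction j arbitrary: n) (simp_all add: Rep_fwd)

lemma Rep_bwd_pow: "Rep_l2 ((bwd_shift ^^ j) y) n = (if j \<le> n then Rep_l2 y (n - j) else 0)"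
proof (induction j arbitrary: n)
  case 0 then show ?case by simp
next
  case (Suc j) then show ?case by (simp add: Rep_bwd, arith)
qed

lemma Rep_P: "Rep_l2 ((bwd_shift ^^ k) ((fwd_shift ^^ k) y)) n = (if k \<le> n then Rep_l2 y n else 0)"
  by (simp add: Rep_bwd_pow Rep_fwd_pow)

lemma R_inf_dg:
  assumes "T \<in> R_inf" shows "\<exists>c. ev_const c \<and> T = dg c"
proof -
  obtain N and \<alpha> :: "nat \<Rightarrow> real" where T:
    "T = (\<lambda>y. Abs_l2 (\<lambda>n. \<Sum>k\<le>N. \<alpha> k * Rep_l2 ((bwd_shift ^^ k) ((fwd_shift ^^ k) y)) n))"
    using assms unfolding R_inf_def by (elim CollectE exE)
  define c where "c n = (\<Sum>k\<le>N. if k \<le> n then \<alpha> k else 0)" for n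
  have ev: "ev_const c" unfolding ev_const_def
  proof (intro exI[of _ N] allI impI)
    fix n assume n: "N \<le> n"
    show "c n = c N" unfolding c_def by (rule sum.cong) (use n in auto)
  qed
  have "T = dg c"
  proof (rule ext)
    fix y
    have "(\<lambda>n. \<Sum>k\<le>N. \<alpha> k * Rep_l2 ((bwd_shift ^^ k) ((fwd_shift ^^ k) y)) n)
        = (\<lambda>n. c n * Rep_l2 y n)"
    proof (rule ext)
      fix n
      show "(\<Sum>k\<le>N. \<alpha> k * Rep_l2 ((bwd_shift ^^ k) ((fwd_shift ^^ k) y)) n) = c n * Rep_l2 y n"
        unfolding c_def sum_distrib_right by (rule sum.cong) (auto simp: Rep_P)
    qed
    then show "T y = dg c y" unfolding T dg_def by simp
  qed
  with ev show ?thesis by blast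
qed

lemma dg_R_inf:
  assumes c: "ev_const c" shows "dg c \<in> R_inf"
proof -
  obtain N where N: "\<forall>n\<ge>N. c n = c N" using c unfolding ev_const_def by (elim exE)
  define \<alpha> where "\<alpha> k = (if k = 0 then c 0 else c k - c (k - 1))" for k
  have tele: "(\<Sum>k\<le>m. \<alpha> k) = c m" for m
    by (induction m) (simp_all add: \<alpha>_def)
  have key: "(\<Sum>k\<le>N. if k \<le> n then \<alpha> k else 0) = c n" for n
  proof -
    have "(\<Sum>k\<le>N. if k \<le> n then \<alpha> k else 0) = (\<Sum>k\<in>{..N} \<inter> {..n}. \<alpha> k)"
      by (subst sum.inter_restrict) auto
    also have "{..N} \<inter> {..n} = {..min N n}" by auto
    also have "(\<Sum>k\<le>min N n. \<alpha> k) = c (min N n)" by (rule tele)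
    also have "c (min N n) = c n"
    proof (cases "n \<le> N")
      case True then show ?thesis by (simp add: min_def)
    next
      case False
      then have "c n = c N" using N[rule_format, of n] by linarith
      then show ?thesis using False by (simp add: min_def)
    qed
    finally show ?thesis .
  qed
  have "dg c = (\<lambda>y. Abs_l2 (\<lambda>n. \<Sum>k\<le>N. \<alpha> k * Rep_l2 ((bwd_shift ^^ k) ((fwd_shift ^^ k) y)) n))"
  proof (rule ext)
    fix y
    have "(\<lambda>n. \<Sum>k\<le>N. \<alpha> k * Rep_l2 ((bwd_shift ^^ k) ((fwd_shift ^^ k) y)) n)
        = (\<lambda>n. c n * Rep_l2 y n)"
    proof (rule ext)
      fix n
      have "(\<Sum>k\<le>N. \<alpha> k * Rep_l2 ((bwd_shift ^^ k) ((fwd_shift ^^ k) y)) n)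
          = (\<Sum>k\<le>N. (if k \<le> n then \<alpha> k else 0) * Rep_l2 y n)"
        by (rule sum.cong) (auto simp: Rep_P)
      also have "\<dots> = c n * Rep_l2 y n" unfolding sum_distrib_right[symmetric] key ..
      finally show "(\<Sum>k\<le>N. \<alpha> k * Rep_l2 ((bwd_shift ^^ k) ((fwd_shift ^^ k) y)) n) = c n * Rep_l2 y n" .
    qed
    then show "dg c y = Abs_l2 (\<lambda>n. \<Sum>k\<le>N. \<alpha> k * Rep_l2 ((bwd_shift ^^ k) ((fwd_shift ^^ k) y)) n)"
      unfolding dg_def by simp
  qed
  then show ?thesis unfolding R_inf_def by blast
qed


lemma inner_determine: "(\<And>z. l2_inner u z = l2_inner v z) \<Longrightarrow> u = v"
  by (rule l2_eqI) (metis inner_e_right)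

lemma proj_eq1:
  assumes E: "is_adjoint E E" and F: "is_adjoint F F"
    and EF: "\<And>x. E (F x) = F x" and FE: "\<And>x. F (E x) = E x"
  shows "E = F"
proof (rule ext, rule inner_determine)
  fix x z
  have "l2_inner (E x) z = l2_inner (F (E x)) z" by (simp add: FE)
  also have "\<dots> = l2_inner (E x) (F z)" using F unfolding is_adjoint_def by simp
  also have "\<dots> = l2_inner x (E (F z))" using E unfolding is_adjoint_def by simp
  also have "\<dots> = l2_inner x (F z)" by (simp add: EF)
  also have "\<dots> = l2_inner (F x) z" using F unfolding is_adjoint_def by simp
  finally show "l2_inner (E x) z = l2_inner (F x) z" .
qed

lemma proj_eq2:
  assumes E: "is_adjoint E E" and F: "is_adjoint F F"
    and EF: "\<And>x. E (F x) = E x" and FE: "\<And>x. F (E x) = F x"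
  shows "E = F"
proof (rule ext, rule inner_determine)
  fix x z
  have "l2_inner (E x) z = l2_inner (E (F x)) z" by (simp add: EF)
  also have "\<dots> = l2_inner (F x) (E z)" using E unfolding is_adjoint_def by simp
  also have "\<dots> = l2_inner x (F (E z))" using F unfolding is_adjoint_def by simp
  also have "\<dots> = l2_inner x (F z)" by (simp add: FE)
  also have "\<dots> = l2_inner (F x) z" using F unfolding is_adjoint_def by simp
  finally show "l2_inner (E x) z = l2_inner (F x) z" .
qed

lemma mp_unique:
  assumes X: "is_mp_pinv A X" and Y: "is_mp_pinv A Y" shows "X = Y"
proof -
  have AXA: "A (X (A x)) = A x" for x
    using fun_cong[OF conjunct1[OF conjunct2[OF X[unfolded is_mp_pinv_def]]], of x] by simp
  have AYA: "A (Y (A x)) = A x" for x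
    using fun_cong[OF conjunct1[OF conjunct2[OF Y[unfolded is_mp_pinv_def]]], of x] by simp
  have XAX: "X (A (X x)) = X x" for x
    using X unfolding is_mp_pinv_def by (metis comp_apply)
  have YAY: "Y (A (Y x)) = Y x" for x
    using Y unfolding is_mp_pinv_def by (metis comp_apply)
  have adjX: "is_adjoint (A \<circ> X) (A \<circ> X)" "is_adjoint (X \<circ> A) (X \<circ> A)"
    using X unfolding is_mp_pinv_def by simp_all
  have adjY: "is_adjoint (A \<circ> Y) (A \<circ> Y)" "is_adjoint (Y \<circ> A) (Y \<circ> A)"
    using Y unfolding is_mp_pinv_def by simp_all
  have AX: "A \<circ> X = A \<circ> Y"
    by (rule proj_eq1[OF adjX(1) adjY(1)]) (simp_all add: AXA AYA)
  have XA: "X \<circ> A = Y \<circ> A"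
    by (rule proj_eq2[OF adjX(2) adjY(2)]) (simp_all add: AXA AYA)
  show ?thesis
  proof (rule ext)
    fix x
    have "X x = X (A (X x))" by (simp add: XAX)
    also have "\<dots> = Y (A (X x))" using fun_cong[OF XA, of "X x"] by simp
    also have "\<dots> = Y (A (Y x))" using fun_cong[OF AX, of x] by simp
    also have "\<dots> = Y x" by (simp add: YAY)
    finally show "X x = Y x" .
  qed
qed

lemma dg_cong: "(\<And>n. f n = g n) \<Longrightarrow> dg f = dg g"
  unfolding dg_def by simp

definition pinv :: "(nat \<Rightarrow> real) \<Rightarrow> nat \<Rightarrow> real" where
  "pinv d n = (if d n = 0 then 0 else 1 / d n)"

lemma ev_pinv: "ev_const d \<Longrightarrow> ev_const (pinv d)"
  unfolding pinv_def by (rule ev_const_comp[of d "\<lambda>t. if t = 0 then 0 else 1 / t"])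

lemma mp_exists:
  assumes d: "ev_const d" shows "is_mp_pinv (dg d) (dg (pinv d))"
proof -
  have p: "ev_const (pinv d)" by (rule ev_pinv[OF d])
  have dp: "ev_const (\<lambda>n. d n * pinv d n)" by (rule ev_const_mult[OF d p])
  have pd: "ev_const (\<lambda>n. pinv d n * d n)" by (rule ev_const_mult[OF p d])
  have 1: "dg d \<circ> dg (pinv d) \<circ> dg d = dg d"
    unfolding dg_comp[OF d p] dg_comp[OF dp d] by (rule dg_cong) (simp add: pinv_def)
  have 2: "dg (pinv d) \<circ> dg d \<circ> dg (pinv d) = dg (pinv d)"
    unfolding dg_comp[OF p d] dg_comp[OF pd p] by (rule dg_cong) (simp add: pinv_def)
  show ?thesis unfolding is_mp_pinv_def
    using dg_bounded[OF p] 1 2 dg_adj[OF dp] dg_adj[OF pd]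
    unfolding dg_comp[OF d p] dg_comp[OF p d] by simp
qed

lemma psd_dg:
  assumes d: "ev_const d" and nn: "\<And>n. 0 \<le> d n" shows "psd (dg d)"
proof -
  let ?s = "\<lambda>n. sqrt (d n)"
  have s: "ev_const ?s" by (rule ev_const_comp[OF d])
  have "dg ?s \<circ> dg ?s = dg d"
    unfolding dg_comp[OF s s] by (rule dg_cong) (simp add: nn)
  then have sq: "dg d x = dg ?s (dg ?s x)" for x by (metis comp_apply)
  show ?thesis unfolding psd_def
  proof (intro conjI allI)
    show "bounded_op (dg d)" by (rule dg_bounded[OF d])
    show "is_adjoint (dg d) (dg d)" by (rule dg_adj[OF d])
    fix x
    have "l2_inner x (dg d x) = l2_inner (dg ?s x) (dg ?s x)"
      unfolding sq using dg_adj[OF s] unfolding is_adjoint_def by simp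
    then show "0 \<le> l2_inner x (dg d x)" using inner_self_nonneg by simp
  qed
qed

lemma psd_nonneg:
  assumes d: "ev_const d" and p: "psd (dg d)" shows "0 \<le> d n"
proof -
  have "0 \<le> l2_inner (e n) (dg d (e n))" using p unfolding psd_def by simp
  also have "l2_inner (e n) (dg d (e n)) = d n" by (simp add: inner_e_left Rep_dg d Rep_e)
  finally show ?thesis .
qed


lemma sqrt_col:
  assumes d: "ev_const d" and nn: "\<And>n. 0 \<le> d n"
    and S: "psd S" and SS: "S \<circ> S = dg d"
  shows "Rep_l2 (S (e m)) k = (if k = m then sqrt (d m) else 0)"
proof -
  define v where "v = S (e m)"
  define r where "r = sqrt (d m)"
  have adj: "\<And>x y. l2_inner x (S y) = l2_inner (S x) y"
    using S unfolding psd_def is_adjoint_def by blast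
  have lin: "\<And>a x b y. S (l2_lin a x b y) = l2_lin a (S x) b (S y)"
    using S unfolding psd_def bounded_op_def by blast
  have pos: "\<And>x. 0 \<le> l2_inner x (S x)"
    using S unfolding psd_def by blast
  have Sv: "Rep_l2 (S v) k = (if k = m then d m else 0)" for k
  proof -
    have "S v = dg d (e m)" unfolding v_def using fun_cong[OF SS, of "e m"] by simp
    then show ?thesis by (simp add: Rep_dg d Rep_e)
  qed
  show ?thesis
  proof (cases "d m = 0")
    case True
    have "l2_inner v v = l2_inner (e m) (S v)" unfolding v_def by (simp add: adj)
    also have "\<dots> = 0" by (simp add: inner_e_left Sv True)
    finally have "Rep_l2 v k = 0" by (rule inner_self_zero)
    then show ?thesis using True by (simp add: v_def)
  next
    case False
    then have dpos: "0 < d m" using nn[of m] by simp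
    then have rpos: "0 < r" unfolding r_def by simp
    have r2: "r * r = d m" unfolding r_def using nn[of m] by simp
    define w where "w = l2_lin 1 v (- r) (e m)"
    have Rw: "Rep_l2 w k = Rep_l2 v k - r * (if k = m then 1 else 0)" for k
      unfolding w_def by (simp add: Rep_lin Rep_e)
    have RSw: "Rep_l2 (S w) k = - r * Rep_l2 w k" for k
    proof -
      have "S w = l2_lin 1 (S v) (- r) v" unfolding w_def lin v_def ..
      then have "Rep_l2 (S w) k = Rep_l2 (S v) k - r * Rep_l2 v k" by (simp add: Rep_lin)
      then show ?thesis using r2 by (simp add: Sv Rw algebra_simps)
    qed
    have "l2_inner w (S w) = (\<Sum>k. - r * (Rep_l2 w k)^2)"
      unfolding l2_inner_def by (simp add: RSw power2_eq_square mult_ac)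
    also have "\<dots> = - r * l2_inner w w"
      unfolding inner_self by (rule suminf_mult[OF Rep_sq])
    finally have "0 \<le> - r * l2_inner w w" using pos[of w] by simp
    then have "l2_inner w w \<le> 0" using rpos by (simp add: mult_le_0_iff)
    then have "l2_inner w w = 0" using inner_self_nonneg[of w] by simp
    then have "Rep_l2 w k = 0" by (rule inner_self_zero)
    then show ?thesis using Rw[of k] by (simp add: v_def r_def split: if_splits)
  qed
qed

lemma sqrt_unique:
  assumes d: "ev_const d" and nn: "\<And>n. 0 \<le> d n"
    and S: "psd S" and SS: "S \<circ> S = dg d"
  shows "S = dg (\<lambda>n. sqrt (d n))"
proof (rule ext, rule l2_eqI)
  fix x m
  have s: "ev_const (\<lambda>n. sqrt (d n))" by (rule ev_const_comp[OF d])
  have adj: "\<And>x y. l2_inner x (S y) = l2_inner (S x) y"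
    using S unfolding psd_def is_adjoint_def by blast
  have "Rep_l2 (S x) m = l2_inner (e m) (S x)" by (simp add: inner_e_left)
  also have "\<dots> = l2_inner (S (e m)) x" by (rule adj)
  also have "\<dots> = (\<Sum>k. if k = m then sqrt (d m) * Rep_l2 x k else 0)"
    unfolding l2_inner_def by (rule arg_cong[where f=suminf]) (auto simp: sqrt_col[OF d nn S SS])
  also have "\<dots> = sqrt (d m) * Rep_l2 x m"
    by (rule sums_unique[symmetric, OF sums_single])
  also have "\<dots> = Rep_l2 (dg (\<lambda>n. sqrt (d n)) x) m" by (simp add: Rep_dg s)
  finally show "Rep_l2 (S x) m = Rep_l2 (dg (\<lambda>n. sqrt (d n)) x) m" .
qed

theorem lemma2:
  assumes "y \<in> R_inf"
  shows "(\<exists>!P. is_mp_pinv y P) \<and> (\<forall>P. is_mp_pinv y P \<longrightarrow> P \<in> R_inf)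
    \<and> ((\<exists>!S. psd S \<and> S \<circ> S = y) \<longleftrightarrow> psd y)
    \<and> (psd y \<longrightarrow> (\<forall>S. psd S \<and> S \<circ> S = y \<longrightarrow> S \<in> R_inf))"
proof -
  obtain d where d: "ev_const d" and y: "y = dg d"
    using R_inf_dg[OF assms] by (elim exE conjE)
  have ex: "is_mp_pinv y (dg (pinv d))" unfolding y by (rule mp_exists[OF d])
  have c1: "\<exists>!P. is_mp_pinv y P"
    using ex mp_unique by blast
  have c2: "\<forall>P. is_mp_pinv y P \<longrightarrow> P \<in> R_inf"
  proof (intro allI impI)
    fix P assume "is_mp_pinv y P"
    then have "P = dg (pinv d)" using ex mp_unique by blast
    then show "P \<in> R_inf" using dg_R_inf[OF ev_pinv[OF d]] by simp
  qed
  let ?s = "\<lambda>n. sqrt (d n)"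
  have s: "ev_const ?s" by (rule ev_const_comp[OF d])
  have c4: "psd y \<longrightarrow> (\<forall>S. psd S \<and> S \<circ> S = y \<longrightarrow> S \<in> R_inf)"
  proof (intro impI allI)
    fix S assume py: "psd y" and S: "psd S \<and> S \<circ> S = y"
    have nn: "\<And>n. 0 \<le> d n" using psd_nonneg[OF d] py y by simp
    have "S = dg ?s" using sqrt_unique[OF d nn] S y by simp
    then show "S \<in> R_inf" using dg_R_inf[OF s] by simp
  qed
  have c3: "(\<exists>!S. psd S \<and> S \<circ> S = y) \<longleftrightarrow> psd y"
  proof
    assume "\<exists>!S. psd S \<and> S \<circ> S = y"
    then obtain S where S: "psd S" "S \<circ> S = y" by blast
    have adj: "\<And>x y. l2_inner x (S y) = l2_inner (S x) y"
      using S(1) unfolding psd_def is_adjoint_def by blast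
    show "psd y" unfolding psd_def
    proof (intro conjI allI)
      show "bounded_op y" unfolding y by (rule dg_bounded[OF d])
      show "is_adjoint y y" unfolding y by (rule dg_adj[OF d])
      fix x
      have "y x = S (S x)" using fun_cong[OF S(2), of x] by simp
      then have "l2_inner x (y x) = l2_inner (S x) (S x)" by (simp add: adj)
      then show "0 \<le> l2_inner x (y x)" using inner_self_nonneg by simp
    qed
  next
    assume py: "psd y"
    have nn: "\<And>n. 0 \<le> d n" using psd_nonneg[OF d] py y by simp
    have ps: "psd (dg ?s)" by (rule psd_dg[OF s]) (simp add: nn)
    have sq: "dg ?s \<circ> dg ?s = y"
      unfolding y dg_comp[OF s s] by (rule dg_cong) (simp add: nn)
    show "\<exists>!S. psd S \<and> S \<circ> S = y"
    proof (rule ex1I[of _ "dg ?s"])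
      show "psd (dg ?s) \<and> dg ?s \<circ> dg ?s = y" using ps sq by simp
      fix S assume "psd S \<and> S \<circ> S = y"
      then show "S = dg ?s" using sqrt_unique[OF d nn] y by simp
    qed
  qed
  show ?thesis using c1 c2 c3 c4 by blast
qed

end
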